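(* Let $m\ge 4$, $t$, $g$ be positive integers with $t\ge g+1$, and put $\alpha=(t-1)-g$. Consider a bin configuration of the game $G(m,t,g)$ in which every current bin load is at most $t-1$. Let $A,B$ be two distinct bins, and define: - $s$ as the sum of the loads of all bins other than $A$ and $B$; - $r=(m-1)g-\alpha-s$; - $o=t-r$. Suppose that all of the following hold: - $r\le t-1$; - the load of $A$ is at most $\alpha$; - the load of $A$ is strictly greater than $(m-1)g-\alpha-o-s$. Then Algorithm wins from this configuration.
   Context: Bin stretching game $G(m,t,g)$: there are $m$ bins. In each round Adversary presents an item of positive integer size, and Algorithm then irrevocably places it into one of the $m$ bins. The load of a bin is the total size of the items in it. A bin configuration consists of: - the current loads $L_1,\dots,L_m$ of the bins, and - the multiset $\mathcal I$ of items presented so far, placed so that the bins have exactly these loads. "Algorithm wins from this configuration" means the following. There is an online rule which, given the configuration and the items presented so far, assigns each newly presented item to a bin. This rule must guarantee: for every finite sequence $e_1,\dots,e_j$ of further positive-integer items such that the multiset $\mathcal I\cup\{e_1,\dots,e_j\}$ can be partitioned into $m$ parts each of total size at most $g$, every bin load is at most $t-1$ after these items are placed. *)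

theory Defs
  imports Main "HOL-Library.Multiset"
begin

text \<open>Bins are indexed by 0..<m. A bin configuration is given by the multiset of items
  in each bin, Bins :: nat => nat multiset; the load of bin i is the sum of its items
  and the multiset of items presented so far is the sum of all bins.\<close>

definition cfg_load :: "(nat \<Rightarrow> nat multiset) \<Rightarrow> nat \<Rightarrow> nat" where
  "cfg_load Bins i = sum_mset (Bins i)"

definition cfg_items :: "nat \<Rightarrow> (nat \<Rightarrow> nat multiset) \<Rightarrow> nat multiset" where
  "cfg_items m Bins = (\<Sum>i<m. Bins i)"

definition packable :: "nat \<Rightarrow> nat \<Rightarrow> nat multiset \<Rightarrow> bool" where
  "packable m g M \<longleftrightarrow> (\<exists>P :: nat \<Rightarrow> nat multiset.
      (\<Sum>i<m. P i) = M \<and> (\<forall>i<m. sum_mset (P i) \<le> g))"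

text \<open>An online rule f maps the sequence e_1..e_k of newly presented items (the last one
  being the item to place) to the bin receiving e_k. Load of bin i after placing es.\<close>
definition load_after ::
  "(nat \<Rightarrow> nat multiset) \<Rightarrow> (nat list \<Rightarrow> nat) \<Rightarrow> nat list \<Rightarrow> nat \<Rightarrow> nat" where
  "load_after Bins f es i =
     cfg_load Bins i + (\<Sum>k<length es. if f (take (Suc k) es) = i then es ! k else 0)"

definition alg_wins :: "nat \<Rightarrow> nat \<Rightarrow> nat \<Rightarrow> (nat \<Rightarrow> nat multiset) \<Rightarrow> bool" where
  "alg_wins m t g Bins \<longleftrightarrow> (\<exists>f :: nat list \<Rightarrow> nat. (\<forall>xs. f xs < m) \<and>
      (\<forall>es. (\<forall>e\<in>set es. 0 < e) \<and> packable m g (cfg_items m Bins + mset es) \<longrightarrow>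
            (\<forall>i<m. load_after Bins f es i \<le> t - 1)))"

end

theory Submission
  imports Defs
begin
definition lbf :: "nat \<Rightarrow> nat \<Rightarrow> nat list \<Rightarrow> nat" where
  "lbf t LB xs = foldl (\<lambda>b x. if b + x \<le> t - 1 then b + x else b) LB xs"

lemma lbf_snoc: "lbf t LB (xs@[x]) = (if lbf t LB xs + x \<le> t - 1 then lbf t LB xs + x else lbf t LB xs)"
  by (simp add: lbf_def)

lemma step_load: "load_after Bins f (es@[x]) i = load_after Bins f es i + (if f (es@[x]) = i then x else 0)"
proof -
  have "(\<Sum>k<length (es@[x]). if f (take (Suc k) (es@[x])) = i then (es@[x]) ! k else 0)
      = (\<Sum>k<length es. if f (take (Suc k) (es@[x])) = i then (es@[x]) ! k else 0) + (if f (es@[x]) = i then x else 0)"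
    by simp
  also have "(\<Sum>k<length es. if f (take (Suc k) (es@[x])) = i then (es@[x]) ! k else 0)
      = (\<Sum>k<length es. if f (take (Suc k) es) = i then es ! k else 0)"
    by (rule sum.cong) (auto simp: nth_append)
  finally show ?thesis unfolding load_after_def by simp
qed

lemma core:
  fixes LA LB t g N A B :: nat and Bins :: "nat \<Rightarrow> nat multiset"
  assumes AB: "A \<noteq> B" and hA: "cfg_load Bins A = LA" and hB: "cfg_load Bins B = LB"
    and LAg: "LA + g \<le> t - 1" and LBt: "LB \<le> t - 1" and tpos: "0 < t"
    and LAr: "int LA > 2 * (int N - int t + 1) - int t"
    and fdef: "f = (\<lambda>es. if lbf t LB (butlast es) + last es \<le> t - 1 then B else A)"
  shows "(\<forall>x\<in>set es. x \<le> g) \<longrightarrow> LA + LB + sum_list es \<le> N \<longrightarrow>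
     (load_after Bins f es A \<le> t - 1 \<and> load_after Bins f es B \<le> t - 1 \<and>
      load_after Bins f es B = lbf t LB es \<and>
      load_after Bins f es A + load_after Bins f es B = LA + LB + sum_list es \<and>
      load_after Bins f es A \<ge> LA \<and>
      (load_after Bins f es A = LA \<or> load_after Bins f es A + load_after Bins f es B \<ge> LA + t) \<and>
      (\<forall>i. i \<noteq> A \<longrightarrow> i \<noteq> B \<longrightarrow> load_after Bins f es i = cfg_load Bins i))"
proof (induction es rule: rev_induct)
  case Nil
  then show ?case using hA hB LAg LBt by (simp add: load_after_def lbf_def)
next
  case (snoc x es)
  show ?case
  proof (intro impI)
    assume g1: "\<forall>y\<in>set (es @ [x]). y \<le> g" and s1: "LA + LB + sum_list (es @ [x]) \<le> N"
    have xg: "x \<le> g" using g1 by simp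
    have IH: "load_after Bins f es A \<le> t - 1 \<and> load_after Bins f es B \<le> t - 1 \<and>
      load_after Bins f es B = lbf t LB es \<and>
      load_after Bins f es A + load_after Bins f es B = LA + LB + sum_list es \<and>
      load_after Bins f es A \<ge> LA \<and>
      (load_after Bins f es A = LA \<or> load_after Bins f es A + load_after Bins f es B \<ge> LA + t) \<and>
      (\<forall>i. i \<noteq> A \<longrightarrow> i \<noteq> B \<longrightarrow> load_after Bins f es i = cfg_load Bins i)"
    proof -
      have pre1: "\<forall>x\<in>set es. x \<le> g" using g1 by simp
      have pre2: "LA + LB + sum_list es \<le> N" using s1 by simp
      show ?thesis using snoc.IH pre1 pre2 by blast
    qed
    define a where "a = load_after Bins f es A"
    define b where "b = load_after Bins f es B"
    have ha: "a \<le> t - 1" and hb1: "b \<le> t - 1" and hb: "b = lbf t LB es"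
      and hs: "a + b = LA + LB + sum_list es" and hla: "LA \<le> a"
      and hd: "a = LA \<or> LA + t \<le> a + b"
      and ho: "\<forall>i. i \<noteq> A \<longrightarrow> i \<noteq> B \<longrightarrow> load_after Bins f es i = cfg_load Bins i"
      using IH unfolding a_def b_def by blast+
    have fx: "f (es@[x]) = (if b + x \<le> t - 1 then B else A)"
      using hb by (simp add: fdef)
    have eO: "\<forall>i. i \<noteq> A \<longrightarrow> i \<noteq> B \<longrightarrow> load_after Bins f (es@[x]) i = cfg_load Bins i"
    proof (intro allI impI)
      fix i assume "i \<noteq> A" "i \<noteq> B"
      then have "f (es@[x]) \<noteq> i" unfolding fx by simp
      then show "load_after Bins f (es@[x]) i = cfg_load Bins i" using ho \<open>i \<noteq> A\<close> \<open>i \<noteq> B\<close>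
        by (simp add: step_load)
    qed
    show "load_after Bins f (es@[x]) A \<le> t - 1 \<and> load_after Bins f (es@[x]) B \<le> t - 1 \<and>
      load_after Bins f (es@[x]) B = lbf t LB (es@[x]) \<and>
      load_after Bins f (es@[x]) A + load_after Bins f (es@[x]) B = LA + LB + sum_list (es@[x]) \<and>
      load_after Bins f (es@[x]) A \<ge> LA \<and>
      (load_after Bins f (es@[x]) A = LA \<or> load_after Bins f (es@[x]) A + load_after Bins f (es@[x]) B \<ge> LA + t) \<and>
      (\<forall>i. i \<noteq> A \<longrightarrow> i \<noteq> B \<longrightarrow> load_after Bins f (es@[x]) i = cfg_load Bins i)"
    proof (cases "b + x \<le> t - 1")
      case True
      have eA: "load_after Bins f (es@[x]) A = a" using True AB by (simp add: step_load fx a_def)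
      have eB: "load_after Bins f (es@[x]) B = b + x" using True by (simp add: step_load fx b_def)
      have lb: "lbf t LB (es@[x]) = b + x" using True hb by (simp add: lbf_snoc)
      show ?thesis unfolding eA eB lb using eO ha True hs hla hd by auto
    next
      case False
      have sx: "a + b + x \<le> N" using hs s1 by simp
      have ax: "a + x \<le> t - 1"
      proof (rule ccontr)
        assume c: "\<not> a + x \<le> t - 1"
        from IH have "a = LA \<or> a + b \<ge> LA + t" unfolding a_def b_def by blast
        then show False
        proof
          assume "a = LA" then show False using c LAg xg by linarith
        next
          assume h: "a + b \<ge> LA + t"
          have i1: "int LA + int t \<le> int a + int b" using h by linarith
          have i2: "int a + int x \<ge> int t" using c tpos by linarith
          have i3: "int b + int x \<ge> int t" using False tpos by linarith
          have i4: "int a + int b + int x \<le> int N" using sx by linarith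
          have i5: "int LA \<le> 2 * int N - 3 * int t" using i1 i2 i3 i4 by linarith
          have i6: "2 * int N - 3 * int t + 2 < int LA" using LAr by (simp add: algebra_simps)
          show False using i5 i6 by linarith
        qed
      qed
      have eA: "load_after Bins f (es@[x]) A = a + x" using False AB by (simp add: step_load fx a_def)
      have eB: "load_after Bins f (es@[x]) B = b" using False AB by (simp add: step_load fx b_def)
      have lb: "lbf t LB (es@[x]) = b" using False hb by (simp add: lbf_snoc)
      have "LA + t \<le> a + x + b" using False hb1 hla tpos by linarith
      then show ?thesis unfolding eA eB lb using eO ax hb1 hs hla by auto
    qed
  qed
qed

lemma sum_mset_lessThan: "sum_mset (\<Sum>i<(n::nat). P i) = (\<Sum>i<n. sum_mset (P i))"
  by (induct n) auto

lemma mem_sum_lessThan: "x \<in># (\<Sum>i<(n::nat). P i) \<Longrightarrow> \<exists>i<n. x \<in># P i"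
proof (induct n)
  case 0 then show ?case by simp
next
  case (Suc n)
  then have "x \<in># (\<Sum>i<n. P i) \<or> x \<in># P n" by simp
  then show ?case
  proof
    assume "x \<in># (\<Sum>i<n. P i)"
    then obtain i where "i < n" "x \<in># P i" using Suc.hyps by blast
    then show ?case using less_SucI by blast
  next
    assume "x \<in># P n" then show ?case by blast
  qed
qed

lemma mem_le_sum_mset: "(x::nat) \<in># M \<Longrightarrow> x \<le> sum_mset M"
proof -
  assume "x \<in># M"
  then obtain Q where "M = add_mset x Q" by (blast dest: multi_member_split)
  then show ?thesis by simp
qed

theorem mainTheorem3:
  fixes m t g A B :: nat and Bins :: "nat \<Rightarrow> nat multiset"
  defines "\<alpha> \<equiv> (int t - 1) - int g"
    and "s \<equiv> int (\<Sum>i\<in>{..<m} - {A, B}. cfg_load Bins i)"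
  defines "r \<equiv> (int m - 1) * int g - \<alpha> - s"
  defines "oo \<equiv> int t - r"
  assumes "m \<ge> 4" and "0 < t" and "0 < g" and "t \<ge> g + 1"
    and items_pos: "\<forall>i<m. \<forall>x\<in>#Bins i. 0 < x"
    and loads: "\<forall>i<m. cfg_load Bins i \<le> t - 1"
    and "A < m" and "B < m" and "A \<noteq> B"
    and "r \<le> int t - 1"
    and "int (cfg_load Bins A) \<le> \<alpha>"
    and "int (cfg_load Bins A) > (int m - 1) * int g - \<alpha> - oo - s"
  shows "alg_wins m t g Bins"
proof -
  define LA where "LA = cfg_load Bins A"
  define LB where "LB = cfg_load Bins B"
  define f where "f = (\<lambda>es. if lbf t LB (butlast es) + last es \<le> t - 1 then B else A)"
  define Ni where "Ni = int m * int g - s"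
  have tot: "(\<Sum>i<m. cfg_load Bins i) = LA + LB + (\<Sum>i\<in>{..<m} - {A, B}. cfg_load Bins i)"
  proof -
    have "(\<Sum>i<m. cfg_load Bins i) = cfg_load Bins A + (\<Sum>i\<in>{..<m} - {A}. cfg_load Bins i)"
      using \<open>A < m\<close> by (intro sum.remove) auto
    also have "(\<Sum>i\<in>{..<m} - {A}. cfg_load Bins i) = cfg_load Bins B + (\<Sum>i\<in>({..<m} - {A}) - {B}. cfg_load Bins i)"
      using \<open>B < m\<close> \<open>A \<noteq> B\<close> by (intro sum.remove) auto
    also have "({..<m} - {A}) - {B} = {..<m} - {A, B}" by auto
    finally show ?thesis by (simp add: LA_def LB_def)
  qed
  have LAg: "LA + g \<le> t - 1" using \<open>int (cfg_load Bins A) \<le> \<alpha>\<close> unfolding LA_def \<alpha>_def by linarith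
  have LBt: "LB \<le> t - 1" using loads \<open>B < m\<close> by (simp add: LB_def)
  have rr: "(int m - 1) * int g - \<alpha> - s = r" by (simp add: r_def)
  have LAr0: "int LA > 2 * r - int t" using \<open>int (cfg_load Bins A) > (int m - 1) * int g - \<alpha> - oo - s\<close> rr unfolding LA_def oo_def by linarith
  have rN: "r = Ni - int t + 1" unfolding r_def Ni_def \<alpha>_def by (simp add: algebra_simps)
  show ?thesis unfolding alg_wins_def
  proof (intro exI[of _ f] conjI allI impI)
    fix xs show "f xs < m" using \<open>A < m\<close> \<open>B < m\<close> by (simp add: f_def)
  next
    fix es i
    assume H: "(\<forall>e\<in>set es. 0 < e) \<and> packable m g (cfg_items m Bins + mset es)" and im: "i < m"
    then obtain P where P1: "(\<Sum>i<m. P i) = cfg_items m Bins + mset es"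
      and P2: "\<forall>i<m. sum_mset (P i) \<le> g" unfolding packable_def by blast
    have "sum_mset (\<Sum>i<m. P i) \<le> m * g"
    proof -
      have "(\<Sum>i<m. sum_mset (P i)) \<le> (\<Sum>i<m. g)" using P2 by (intro sum_mono) auto
      then show ?thesis by (simp add: sum_mset_lessThan)
    qed
    then have "sum_mset (cfg_items m Bins) + sum_list es \<le> m * g"
      by (simp add: P1 sum_mset_sum_list)
    then have sb: "LA + LB + (\<Sum>i\<in>{..<m} - {A, B}. cfg_load Bins i) + sum_list es \<le> m * g"
      by (simp add: cfg_items_def sum_mset_lessThan cfg_load_def[symmetric] tot)
    have sbi: "int (LA + LB + sum_list es) \<le> Ni"
    proof -
      have "int (LA + LB + (\<Sum>i\<in>{..<m} - {A, B}. cfg_load Bins i) + sum_list es) \<le> int (m * g)"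
        using sb by (simp only: of_nat_le_iff)
      then show ?thesis unfolding Ni_def s_def by simp
    qed
    define N where "N = nat Ni"
    have NN: "int N = Ni" using sbi unfolding N_def by linarith
    have eg: "\<forall>x\<in>set es. x \<le> g"
    proof
      fix x assume "x \<in> set es"
      then have "x \<in># (\<Sum>i<m. P i)" by (simp add: P1)
      then obtain j where "j < m" "x \<in># P j" using mem_sum_lessThan[where n=m and P=P] by blast
      then have "x \<le> sum_mset (P j)" "sum_mset (P j) \<le> g" using P2 mem_le_sum_mset by auto
      then show "x \<le> g" by linarith
    qed
    have sN: "LA + LB + sum_list es \<le> N" using sbi NN by linarith
    have LAr: "int LA > 2 * (int N - int t + 1) - int t" using LAr0 rN NN by simp
    note C = core[OF \<open>A \<noteq> B\<close> LA_def[symmetric] LB_def[symmetric] LAg LBt \<open>0 < t\<close> LAr f_def, THEN mp, THEN mp, OF eg sN]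
    note C2 = C
    have cA: "load_after Bins f es A \<le> t - 1" using C2 by blast
    have cB: "load_after Bins f es B \<le> t - 1" using C2 by blast
    have cO: "\<forall>i. i \<noteq> A \<longrightarrow> i \<noteq> B \<longrightarrow> load_after Bins f es i = cfg_load Bins i"
      using C2 by blast
    show "load_after Bins f es i \<le> t - 1"
    proof (cases "i = A")
      case True then show ?thesis using cA by simp
    next
      case nA: False
      show ?thesis
      proof (cases "i = B")
        case True then show ?thesis using cB by simp
      next
        case False
        then have "load_after Bins f es i = cfg_load Bins i" using cO nA by blast
        then show ?thesis using loads im by simp
      qed
    qed
  qed
qed

end
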